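(* For each $n\in\mathbb{N}$ let $L_n\in\{n-1,n\}$ and let $S_{\mathbf{a}^n}$ be a linear binary subdivision scheme of the form \[ (S_{\mathbf{a}^n} \mathbf{f})_{2j} = \sum_{l=1-n}^{L_n} a^{n,0}_{l} f_{j+l}, \qquad (S_{\mathbf{a}^n} \mathbf{f})_{2j + 1} = \sum_{l=1-n}^{L_n+1} a^{n,1}_{l} f_{j+l}, \qquad j\in\mathbb{Z}, \] which is odd-symmetric, i.e. $a^{n,0}_l=a^{n,0}_{L_n+1-n-l}$ for $l=1-n,\ldots,L_n$ and $a^{n,1}_l=a^{n,1}_{L_n+2-n-l}$ for $l=1-n,\ldots,L_n+1$, and which reproduces constants: $\sum_{l} a^{n,0}_l=\sum_{l} a^{n,1}_l=1$. Let $r:[-1,1]\to\mathbb{R}$ be $\mathcal{C}^1$, $R(t):=\int_{-1}^t r(s)\,ds$, and assume there are $\alpha>2$, $\mu>0$ such that for all $n$ and all $j=1-n,\ldots,L_n$, \[ a^{n,0}_{j} - a^{n,1}_{j} = r(j/n)\,n^{-2} + \varepsilon^n_j, \qquad |\varepsilon^n_j| \leq \mu n^{-\alpha}, \] and $\int_{-1}^1|R(t)|\,dt<1$. Then there exists $n_0$ such that $S_{\mathbf{a}^n}$ is (uniformly) convergent for every $n>n_0$. If moreover $\alpha=3$, one may take, with $\|R\|_1=\int_{-1}^1|R|$, $\|r\|_\infty=\max_{[-1,1]}|r|$, $\|r'\|_\infty=\max_{[-1,1]}|r'|$ and $B=\|r\|_\infty+2(\mu+\|r'\|_\infty)$, \[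 n_0=\frac{\sqrt{B^2+4(\|R\|_1-1)(\mu+\|r'\|_\infty)}+B}{2(1-\|R\|_1)} \ \text{ if } L_n=n-1, \qquad n_0=\frac{\sqrt{B^2+4(1-\|R\|_1)\mu}+B}{2(1-\|R\|_1)} \ \text{ if } L_n=n. \]
   Context: A subdivision scheme $S$ is (uniformly) convergent if for every bounded real sequence $\mathbf{f}^0$ there is a continuous $F:\mathbb{R}\to\mathbb{R}$ with $\lim_{k\to\infty}\sup_{j\in\mathbb{Z}}|(S^k\mathbf{f}^0)_j-F(2^{-k}j)|=0$. *)

theory Defs
  imports "HOL-Analysis.Analysis"
begin

definition subdiv ::
  "(int \<Rightarrow> real) \<Rightarrow> (int \<Rightarrow> real) \<Rightarrow> int \<Rightarrow> int \<Rightarrow> (int \<Rightarrow> real) \<Rightarrow> int \<Rightarrow> real" where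
  "subdiv a0 a1 lo hi f j =
     (if even j then (\<Sum>l\<in>{lo..hi}. a0 l * f (j div 2 + l))
      else (\<Sum>l\<in>{lo..hi+1}. a1 l * f (j div 2 + l)))"

definition convergent_scheme :: "((int \<Rightarrow> real) \<Rightarrow> (int \<Rightarrow> real)) \<Rightarrow> bool" where
  "convergent_scheme S \<longleftrightarrow>
     (\<forall>f0 :: int \<Rightarrow> real. bounded (range f0) \<longrightarrow>
        (\<exists>F :: real \<Rightarrow> real. continuous_on UNIV F \<and>
           (\<forall>e>0. \<exists>K. \<forall>k\<ge>K. \<forall>j. \<bar>(S ^^ k) f0 j - F (real_of_int j / 2 ^ k)\<bar> \<le> e)))"

end

theory Submission
  imports Defs
begin


lemma dbound_nat:
  assumes "\<forall>i. \<bar>g (i+1) - g i\<bar> \<le> (D::real)"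
  shows "\<bar>g (i + int k) - g i\<bar> \<le> real k * D"
proof (induction k)
  case 0 then show ?case by simp
next
  case (Suc k)
  have "\<bar>g (i + int k + 1) - g (i + int k)\<bar> \<le> D" using assms by blast
  moreover have "g (i + int (Suc k)) = g (i + int k + 1)" by (simp add: algebra_simps)
  ultimately show ?case using Suc by (simp add: algebra_simps)
qed

lemma dbound_int:
  assumes "\<forall>i. \<bar>g (i+1) - g i\<bar> \<le> (D::real)"
  shows "\<bar>g (i + l) - g i\<bar> \<le> real_of_int \<bar>l\<bar> * D"
proof (cases "l \<ge> 0")
  case True
  then show ?thesis using dbound_nat[OF assms, of i "nat l"] by simp
next
  case False
  have "\<bar>g ((i + l) + int (nat (-l))) - g (i+l)\<bar> \<le> real (nat (-l)) * D"
    using dbound_nat[OF assms] by blast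
  then show ?thesis using False by (simp add: abs_minus_commute)
qed

lemma sum_mask_dev:
  fixes a :: "int \<Rightarrow> real"
  assumes "(\<Sum>l\<in>A. a l) = 1" "finite A"
    and "\<forall>i. \<bar>g (i+1) - g i\<bar> \<le> (D::real)"
  shows "\<bar>(\<Sum>l\<in>A. a l * g (i + l)) - g i\<bar> \<le> (\<Sum>l\<in>A. \<bar>a l\<bar> * real_of_int \<bar>l\<bar>) * D"
proof -
  have "(\<Sum>l\<in>A. a l * g (i + l)) - g i = (\<Sum>l\<in>A. a l * (g (i + l) - g i))"
    using assms(1) by (simp add: algebra_simps sum_subtractf sum_distrib_right[symmetric])
  also have "\<bar>\<dots>\<bar> \<le> (\<Sum>l\<in>A. \<bar>a l * (g (i + l) - g i)\<bar>)" by (rule sum_abs)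
  also have "\<dots> \<le> (\<Sum>l\<in>A. \<bar>a l\<bar> * real_of_int \<bar>l\<bar> * D)"
    apply (rule sum_mono)
    using dbound_int[OF assms(3)] by (simp add: abs_mult mult.assoc mult_left_mono)
  finally show ?thesis by (simp add: sum_distrib_right)
qed



lemma floor_double:
  fixes y :: real
  shows "\<lfloor>2 * y\<rfloor> = 2 * \<lfloor>y\<rfloor> \<or> \<lfloor>2 * y\<rfloor> = 2 * \<lfloor>y\<rfloor> + 1"
proof -
  have a: "real_of_int \<lfloor>y\<rfloor> \<le> y" "y < real_of_int \<lfloor>y\<rfloor> + 1" by linarith+
  have "2 * \<lfloor>y\<rfloor> \<le> \<lfloor>2 * y\<rfloor>" using a by (simp add: le_floor_iff)
  moreover have "\<lfloor>2 * y\<rfloor> < 2 * \<lfloor>y\<rfloor> + 2" using a by (simp add: floor_less_iff) linarith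
  ultimately show ?thesis by linarith
qed

lemma conv_abstract:
  fixes a0 a1 :: "int \<Rightarrow> real" and lo hi :: int and lam :: real
  assumes s0: "(\<Sum>l\<in>{lo..hi}. a0 l) = 1" and s1: "(\<Sum>l\<in>{lo..hi+1}. a1 l) = 1"
    and lam0: "0 \<le> lam" and lam1: "lam < 1"
    and contr: "\<And>g D. \<forall>i. \<bar>g (i+1) - g i\<bar> \<le> D \<Longrightarrow>
        \<forall>i. \<bar>subdiv a0 a1 lo hi g (i+1) - subdiv a0 a1 lo hi g i\<bar> \<le> lam * D"
  shows "convergent_scheme (subdiv a0 a1 lo hi)"
  unfolding convergent_scheme_def
proof (intro allI impI)
  fix f0 :: "int \<Rightarrow> real"
  assume "bounded (range f0)"
  then obtain M where M: "\<And>i. \<bar>f0 i\<bar> \<le> M" unfolding bounded_iff by auto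
  define S where "S = subdiv a0 a1 lo hi"
  define D0 where "D0 = 2 * M"
  define K where "K = (\<Sum>l\<in>{lo..hi}. \<bar>a0 l\<bar> * real_of_int \<bar>l\<bar>) + (\<Sum>l\<in>{lo..hi+1}. \<bar>a1 l\<bar> * real_of_int \<bar>l\<bar>)"
  define v where "v k = (S ^^ k) f0" for k
  have D0: "D0 \<ge> 0" using M[of 0] unfolding D0_def by linarith
  have K0: "K \<ge> 0" unfolding K_def by (intro add_nonneg_nonneg sum_nonneg) auto
  have vd: "\<forall>i. \<bar>v k (i+1) - v k i\<bar> \<le> lam ^ k * D0" for k
  proof (induction k)
    case 0
    show ?case unfolding v_def D0_def using M by (simp add: abs_le_iff) (smt (verit) M abs_le_iff)
  next
    case (Suc k)
    have "\<forall>i. \<bar>S (v k) (i+1) - S (v k) i\<bar> \<le> lam * (lam ^ k * D0)"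
      unfolding S_def by (rule contr[OF Suc])
    moreover have "v (Suc k) = S (v k)" unfolding v_def by simp
    ultimately show ?case by (simp add: mult.assoc)
  qed
  have step: "\<bar>v (Suc k) (2 * i + e) - v k i\<bar> \<le> K * (lam ^ k * D0)" if e: "e = 0 \<or> e = 1" for k i e
  proof -
    have vS: "v (Suc k) = S (v k)" unfolding v_def by simp
    have ld: "lam ^ k * D0 \<ge> 0" using lam0 D0 by simp
    show ?thesis
    proof (cases "e = 0")
      case True
      have "\<bar>v (Suc k) (2 * i + e) - v k i\<bar> = \<bar>(\<Sum>l\<in>{lo..hi}. a0 l * v k (i + l)) - v k i\<bar>"
        using True unfolding vS S_def subdiv_def by simp
      also have "\<dots> \<le> (\<Sum>l\<in>{lo..hi}. \<bar>a0 l\<bar> * real_of_int \<bar>l\<bar>) * (lam ^ k * D0)"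
        by (rule sum_mask_dev[OF s0 _ vd]) simp
      also have "\<dots> \<le> K * (lam ^ k * D0)"
        unfolding K_def using ld by (intro mult_right_mono) (auto intro: sum_nonneg)
      finally show ?thesis .
    next
      case False
      then have e1: "e = 1" using e by simp
      have "(2 * i + 1) div 2 = i" by simp
      then have "\<bar>v (Suc k) (2 * i + e) - v k i\<bar> = \<bar>(\<Sum>l\<in>{lo..hi+1}. a1 l * v k (i + l)) - v k i\<bar>"
        using e1 unfolding vS S_def subdiv_def by simp
      also have "\<dots> \<le> (\<Sum>l\<in>{lo..hi+1}. \<bar>a1 l\<bar> * real_of_int \<bar>l\<bar>) * (lam ^ k * D0)"
        by (rule sum_mask_dev[OF s1 _ vd]) simp
      also have "\<dots> \<le> K * (lam ^ k * D0)"
        unfolding K_def using ld by (intro mult_right_mono) (auto intro: sum_nonneg)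
      finally show ?thesis .
    qed
  qed
  define G where "G k x = v k \<lfloor>2 ^ k * x\<rfloor>" for k and x :: real
  have Gstep: "\<bar>G (Suc k) x - G k x\<bar> \<le> K * D0 * lam ^ k" for k x
  proof -
    have "2 ^ Suc k * x = 2 * (2 ^ k * x)" by simp
    then obtain e where e: "e = 0 \<or> e = 1" and fl: "\<lfloor>2 ^ Suc k * x\<rfloor> = 2 * \<lfloor>2 ^ k * x\<rfloor> + e"
      using floor_double[of "2 ^ k * x"] by (metis add.right_neutral)
    show ?thesis unfolding G_def fl using step[OF e, of k "\<lfloor>2 ^ k * x\<rfloor>"] by (simp add: algebra_simps)
  qed
  define T where "T k = K * D0 * lam ^ k / (1 - lam)" for k
  have Gcau: "\<bar>G (k + p) x - G k x\<bar> \<le> K * D0 * lam ^ k * (1 - lam ^ p) / (1 - lam)" for k p x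
  proof (induction p)
    case 0 then show ?case by simp
  next
    case (Suc p)
    have "\<bar>G (k + Suc p) x - G k x\<bar> \<le> \<bar>G (Suc (k + p)) x - G (k + p) x\<bar> + \<bar>G (k + p) x - G k x\<bar>"
      by simp
    also have "\<dots> \<le> K * D0 * lam ^ (k + p) + K * D0 * lam ^ k * (1 - lam ^ p) / (1 - lam)"
      using Gstep Suc by (intro add_mono) auto
    also have "\<dots> = K * D0 * lam ^ k * (1 - lam ^ Suc p) / (1 - lam)"
      using lam1 by (simp add: field_simps power_add)
    finally show ?case .
  qed
  have Gcau2: "\<bar>G (k + p) x - G k x\<bar> \<le> T k" for k p x
  proof -
    have "K * D0 * lam ^ k * (1 - lam ^ p) / (1 - lam) \<le> T k"
    proof -
      have h1: "K * D0 * lam ^ k \<ge> 0" using lam0 K0 D0 by simp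
      have h2: "1 - lam ^ p \<le> 1" using lam0 by simp
      have "K * D0 * lam ^ k * (1 - lam ^ p) \<le> K * D0 * lam ^ k" using mult_left_mono[OF h2 h1] by simp
      then show ?thesis unfolding T_def using lam1 by (intro divide_right_mono) auto
    qed
    then show ?thesis using Gcau[of k p x] by linarith
  qed
  have Tlim: "T \<longlonglongrightarrow> 0"
  proof -
    have "(\<lambda>k. K * D0 / (1 - lam) * lam ^ k) \<longlonglongrightarrow> K * D0 / (1 - lam) * 0"
      by (intro tendsto_intros LIMSEQ_power_zero) (use lam0 lam1 in simp)
    then show ?thesis unfolding T_def by simp
  qed
  have T0: "T k \<ge> 0" for k unfolding T_def using lam0 lam1 K0 D0 by simp
  have conv: "convergent (\<lambda>k. G k x)" for x
  proof (rule Cauchy_convergent, rule metric_CauchyI)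
    fix e :: real assume e: "e > 0"
    from Tlim e have "eventually (\<lambda>k. T k < e / 2) sequentially"
      by (intro order_tendstoD) auto
    then obtain N where N: "T N < e / 2" by (auto simp: eventually_sequentially)
    show "\<exists>M. \<forall>m\<ge>M. \<forall>n\<ge>M. dist (G m x) (G n x) < e"
    proof (intro exI allI impI)
      fix m n assume "m \<ge> N" "n \<ge> N"
      then have "\<bar>G m x - G N x\<bar> \<le> T N" "\<bar>G n x - G N x\<bar> \<le> T N"
        using Gcau2[of N "m - N" x] Gcau2[of N "n - N" x] by simp_all
      then show "dist (G m x) (G n x) < e" using N by (simp add: dist_real_def)
    qed
  qed
  define F where "F x = lim (\<lambda>k. G k x)" for x
  have Flim: "(\<lambda>k. G k x) \<longlonglongrightarrow> F x" for x
    unfolding F_def using conv convergent_LIMSEQ_iff by blast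
  have FG: "\<bar>F x - G k x\<bar> \<le> T k" for k x
  proof -
    have "(\<lambda>p. G (p + k) x) \<longlonglongrightarrow> F x" using LIMSEQ_ignore_initial_segment[OF Flim] .
    then have "(\<lambda>p. \<bar>G (p + k) x - G k x\<bar>) \<longlonglongrightarrow> \<bar>F x - G k x\<bar>"
      by (intro tendsto_intros)
    then show ?thesis
    proof (rule tendsto_upperbound)
      show "\<forall>\<^sub>F i in sequentially. \<bar>G (i + k) x - G k x\<bar> \<le> T k"
        using Gcau2[of k _ x] by (simp add: add.commute)
    qed simp
  qed
  have main: "\<exists>F. continuous_on UNIV F \<and>
           (\<forall>e>0. \<exists>K. \<forall>k\<ge>K. \<forall>j. \<bar>(S ^^ k) f0 j - F (real_of_int j / 2 ^ k)\<bar> \<le> e)"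
  proof (rule exI[of _ F], intro conjI)
    show "continuous_on UNIV F"
      unfolding continuous_on_iff
    proof (intro ballI allI impI)
      fix x e :: real assume e: "0 < e"
      have "(\<lambda>k. 2 * T k + lam ^ k * D0) \<longlonglongrightarrow> 2 * 0 + 0 * D0"
        by (intro tendsto_intros Tlim LIMSEQ_power_zero) (use lam0 lam1 in simp)
      then have "eventually (\<lambda>k. 2 * T k + lam ^ k * D0 < e) sequentially"
        using e by (intro order_tendstoD) auto
      then obtain k where k: "2 * T k + lam ^ k * D0 < e" by (auto simp: eventually_sequentially)
      show "\<exists>d>0. \<forall>y\<in>UNIV. dist y x < d \<longrightarrow> dist (F y) (F x) < e"
      proof (intro exI conjI ballI impI)
        show "(0::real) < 1 / 2 ^ k" by simp
        fix y assume "dist y x < 1 / 2 ^ k"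
        then have "2 ^ k * \<bar>y - x\<bar> < 1"
          by (simp add: dist_real_def field_simps)
        moreover have "\<bar>2 ^ k * y - 2 ^ k * x\<bar> = 2 ^ k * \<bar>y - x\<bar>"
          by (simp add: abs_mult flip: right_diff_distrib)
        ultimately have "\<bar>2 ^ k * y - 2 ^ k * x\<bar> < 1" by simp
        then have d: "\<bar>\<lfloor>2 ^ k * y\<rfloor> - \<lfloor>2 ^ k * x\<rfloor>\<bar> \<le> 1" by linarith
        have "\<bar>v k (\<lfloor>2 ^ k * x\<rfloor> + (\<lfloor>2 ^ k * y\<rfloor> - \<lfloor>2 ^ k * x\<rfloor>)) - v k \<lfloor>2 ^ k * x\<rfloor>\<bar>
            \<le> real_of_int \<bar>\<lfloor>2 ^ k * y\<rfloor> - \<lfloor>2 ^ k * x\<rfloor>\<bar> * (lam ^ k * D0)"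
          by (rule dbound_int[OF vd])
        also have "\<dots> \<le> 1 * (lam ^ k * D0)"
          using d lam0 D0 by (intro mult_right_mono) auto
        finally have "\<bar>G k y - G k x\<bar> \<le> lam ^ k * D0" unfolding G_def by simp
        then show "dist (F y) (F x) < e"
          using FG[of y k] FG[of x k] k by (simp add: dist_real_def)
      qed
    qed
  next
    show "\<forall>e>0. \<exists>K. \<forall>k\<ge>K. \<forall>j. \<bar>(S ^^ k) f0 j - F (real_of_int j / 2 ^ k)\<bar> \<le> e"
    proof (intro allI impI)
    fix e :: real assume e: "e > 0"
    from Tlim e have "eventually (\<lambda>k. T k < e) sequentially"
      by (intro order_tendstoD) auto
    then obtain N where N: "\<And>k. k \<ge> N \<Longrightarrow> T k < e" by (auto simp: eventually_sequentially)
    show "\<exists>K. \<forall>k\<ge>K. \<forall>j. \<bar>(S ^^ k) f0 j - F (real_of_int j / 2 ^ k)\<bar> \<le> e"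
    proof (intro exI allI impI)
      fix k j assume "k \<ge> N"
      have "G k (real_of_int j / 2 ^ k) = (S ^^ k) f0 j" unfolding G_def v_def by simp
      then show "\<bar>(S ^^ k) f0 j - F (real_of_int j / 2 ^ k)\<bar> \<le> e"
        using FG[of "real_of_int j / 2 ^ k" k] N[OF \<open>k \<ge> N\<close>] by (simp add: abs_minus_commute)
    qed
    qed
  qed
  then show "\<exists>F. continuous_on UNIV F \<and>
           (\<forall>e>0. \<exists>K. \<forall>k\<ge>K. \<forall>j. \<bar>(subdiv a0 a1 lo hi ^^ k) f0 j - F (real_of_int j / 2 ^ k)\<bar> \<le> e)"
    unfolding S_def .
qed



lemma sum_int_nat:
  fixes F :: "int \<Rightarrow> real"
  shows "(\<Sum>l\<in>{lo..lo + int N - 1}. F l) = (\<Sum>k<N. F (lo + int k))"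
proof -
  have "{lo..lo + int N - 1} = (\<lambda>k. lo + int k) ` {..<N}"
  proof
    show "{lo..lo + int N - 1} \<subseteq> (\<lambda>k. lo + int k) ` {..<N}"
    proof
      fix l assume "l \<in> {lo..lo + int N - 1}"
      then have "l = lo + int (nat (l - lo))" "nat (l - lo) < N" by auto
      then show "l \<in> (\<lambda>k. lo + int k) ` {..<N}" by blast
    qed
  qed auto
  moreover have "inj_on (\<lambda>k. lo + int k) {..<N}" by (auto simp: inj_on_def)
  ultimately show ?thesis by (simp add: sum.reindex)
qed

lemma sum_int_nat1:
  fixes F :: "int \<Rightarrow> real"
  shows "(\<Sum>l\<in>{lo..lo + int N}. F l) = (\<Sum>k<Suc N. F (lo + int k))"
  using sum_int_nat[of F lo "Suc N"] by simp

lemma abel: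
  fixes c H :: "nat \<Rightarrow> real"
  shows "(\<Sum>k<N. (\<Sum>m<Suc k. c m) * (H (Suc k) - H k)) = (\<Sum>m<N. c m) * H N - (\<Sum>k<N. c k * H k)"
  by (induction N) (simp_all add: algebra_simps)

lemma mask_identity:
  fixes a0 a1 H :: "nat \<Rightarrow> real"
  assumes s0: "(\<Sum>k<N. a0 k) = 1" and s1: "(\<Sum>k<Suc N. a1 k) = 1"
  shows "(\<Sum>k<Suc N. a1 k * H k) - (\<Sum>k<N. a0 k * H k)
       = (\<Sum>k<N. (\<Sum>m<Suc k. a0 m - a1 m) * (H (Suc k) - H k))"
proof -
  have A: "(\<Sum>k<N. (\<Sum>m<Suc k. a0 m - a1 m) * (H (Suc k) - H k))
       = (\<Sum>m<N. a0 m - a1 m) * H N - (\<Sum>k<N. (a0 k - a1 k) * H k)" by (rule abel)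
  have "(\<Sum>m<N. a0 m - a1 m) = (\<Sum>m<N. a0 m) - (\<Sum>m<N. a1 m)" by (rule sum_subtractf)
  moreover have "(\<Sum>m<Suc N. a1 m) = (\<Sum>m<N. a1 m) + a1 N" by simp
  ultimately have "(\<Sum>m<N. a0 m - a1 m) = a1 N" using s0 s1 by linarith
  then show ?thesis using A by (simp add: sum_subtractf algebra_simps)
qed

lemma abs_abel_bound:
  fixes P H :: "nat \<Rightarrow> real"
  assumes "\<And>k. k < N \<Longrightarrow> \<bar>H (Suc k) - H k\<bar> \<le> D"
  shows "\<bar>\<Sum>k<N. P k * (H (Suc k) - H k)\<bar> \<le> (\<Sum>k<N. \<bar>P k\<bar>) * D"
proof -
  have "\<bar>\<Sum>k<N. P k * (H (Suc k) - H k)\<bar> \<le> (\<Sum>k<N. \<bar>P k * (H (Suc k) - H k)\<bar>)" by (rule sum_abs)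
  also have "\<dots> \<le> (\<Sum>k<N. \<bar>P k\<bar> * D)"
    by (rule sum_mono) (use assms in \<open>auto simp: abs_mult intro: mult_left_mono\<close>)
  finally show ?thesis by (simp add: sum_distrib_right)
qed

lemma contraction:
  fixes a0 a1 :: "int \<Rightarrow> real" and lo :: int and N :: nat and g :: "int \<Rightarrow> real"
  assumes s0: "(\<Sum>k<N. a0 (lo + int k)) = 1" and s1: "(\<Sum>k<Suc N. a1 (lo + int k)) = 1"
    and sym0: "\<And>k. k < N \<Longrightarrow> a0 (lo + int k) = a0 (lo + int (N - 1 - k))"
    and sym1: "\<And>k. k \<le> N \<Longrightarrow> a1 (lo + int k) = a1 (lo + int (N - k))"
    and g: "\<forall>i. \<bar>g (i+1) - g i\<bar> \<le> D"
  shows "\<forall>i. \<bar>subdiv a0 a1 lo (lo + int N - 1) g (i+1) - subdiv a0 a1 lo (lo + int N - 1) g i\<bar>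
          \<le> (\<Sum>k<N. \<bar>\<Sum>m<Suc k. a0 (lo + int m) - a1 (lo + int m)\<bar>) * D"
proof
  fix i :: int
  define S where "S = subdiv a0 a1 lo (lo + int N - 1) g"
  define A0 where "A0 k = a0 (lo + int k)" for k
  define A1 where "A1 k = a1 (lo + int k)" for k
  define j where "j = i div 2"
  define G where "G k = g (j + lo + int k)" for k
  have s0': "(\<Sum>k<N. A0 k) = 1" using s0 unfolding A0_def .
  have s1': "(\<Sum>k<Suc N. A1 k) = 1" using s1 unfolding A1_def .
  have Sodd: "S (2 * j + 1) = (\<Sum>k<Suc N. A1 k * G k)"
    unfolding S_def subdiv_def A1_def G_def by (simp add: sum_int_nat1 add.assoc)
  have Seven: "S (2 * j) = (\<Sum>k<N. A0 k * G k)"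
    unfolding S_def subdiv_def A0_def G_def by (simp add: sum_int_nat add.assoc)
  have Seven2: "S (2 * j + 2) = (\<Sum>k<N. A0 k * G (Suc k))"
  proof -
    have "S (2 * (j + 1)) = (\<Sum>k<N. A0 k * G (Suc k))"
      unfolding S_def subdiv_def A0_def G_def by (simp add: sum_int_nat algebra_simps)
    then show ?thesis by (simp add: algebra_simps)
  qed
  show "\<bar>S (i+1) - S i\<bar> \<le> (\<Sum>k<N. \<bar>\<Sum>m<Suc k. a0 (lo + int m) - a1 (lo + int m)\<bar>) * D"
  proof (cases "even i")
    case True
    then have i: "i = 2 * j" unfolding j_def by simp
    have "S (i+1) - S i = (\<Sum>k<N. (\<Sum>m<Suc k. A0 m - A1 m) * (G (Suc k) - G k))"
      unfolding i Sodd Seven by (rule mask_identity[OF s0' s1'])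
    moreover have "\<bar>\<Sum>k<N. (\<Sum>m<Suc k. A0 m - A1 m) * (G (Suc k) - G k)\<bar>
        \<le> (\<Sum>k<N. \<bar>\<Sum>m<Suc k. A0 m - A1 m\<bar>) * D"
    proof (rule abs_abel_bound)
      fix k assume "k < N"
      have "G (Suc k) = g ((j + lo + int k) + 1)" unfolding G_def by (simp add: algebra_simps)
      then show "\<bar>G (Suc k) - G k\<bar> \<le> D" using g unfolding G_def by simp
    qed
    ultimately show ?thesis unfolding A0_def A1_def by simp
  next
    case False
    then have i: "i = 2 * j + 1" unfolding j_def by simp
    define H where "H k = G (N - k)" for k
    have r0: "(\<Sum>k<N. A0 k * G (Suc k)) = (\<Sum>k<N. A0 k * H k)"
    proof -
      have "(\<Sum>k<N. A0 k * H k) = (\<Sum>k<N. A0 (N - Suc k) * H (N - Suc k))"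
        by (rule sum.nat_diff_reindex[symmetric])
      also have "\<dots> = (\<Sum>k<N. A0 k * G (Suc k))"
      proof (rule sum.cong)
        fix k assume "k \<in> {..<N}"
        then have k: "k < N" by simp
        have "A0 (N - Suc k) = A0 k" unfolding A0_def using sym0[OF k] by (simp add: diff_diff_left)
        moreover have "N - (N - Suc k) = Suc k" using k by simp
        ultimately show "A0 (N - Suc k) * H (N - Suc k) = A0 k * G (Suc k)" unfolding H_def by simp
      qed simp
      finally show ?thesis by simp
    qed
    have r1: "(\<Sum>k<Suc N. A1 k * G k) = (\<Sum>k<Suc N. A1 k * H k)"
    proof -
      have "(\<Sum>k<Suc N. A1 k * H k) = (\<Sum>k<Suc N. A1 (Suc N - Suc k) * H (Suc N - Suc k))"
        by (rule sum.nat_diff_reindex[symmetric])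
      also have "\<dots> = (\<Sum>k<Suc N. A1 k * G k)"
      proof (rule sum.cong)
        fix k assume "k \<in> {..<Suc N}"
        then have k: "k \<le> N" by simp
        have "A1 (N - k) = A1 k" unfolding A1_def using sym1[OF k] by simp
        moreover have "N - (N - k) = k" using k by simp
        ultimately show "A1 (Suc N - Suc k) * H (Suc N - Suc k) = A1 k * G k" unfolding H_def by simp
      qed simp
      finally show ?thesis by simp
    qed
    have "S (i+1) - S i = - ((\<Sum>k<Suc N. A1 k * H k) - (\<Sum>k<N. A0 k * H k))"
      unfolding i using Seven2 Sodd r0 r1 by (simp add: add.assoc)
    also have "\<dots> = - (\<Sum>k<N. (\<Sum>m<Suc k. A0 m - A1 m) * (H (Suc k) - H k))"
      by (simp only: mask_identity[OF s0' s1'])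
    finally have eq: "\<bar>S (i+1) - S i\<bar> = \<bar>\<Sum>k<N. (\<Sum>m<Suc k. A0 m - A1 m) * (H (Suc k) - H k)\<bar>"
      by simp
    have "\<bar>\<Sum>k<N. (\<Sum>m<Suc k. A0 m - A1 m) * (H (Suc k) - H k)\<bar>
        \<le> (\<Sum>k<N. \<bar>\<Sum>m<Suc k. A0 m - A1 m\<bar>) * D"
    proof (rule abs_abel_bound)
      fix k assume k: "k < N"
      have "H k = g ((j + lo + int (N - Suc k)) + 1)" unfolding H_def G_def using k
        by (simp add: algebra_simps of_nat_diff)
      moreover have "H (Suc k) = g (j + lo + int (N - Suc k))" unfolding H_def G_def by simp
      ultimately show "\<bar>H (Suc k) - H k\<bar> \<le> D" using g by (simp add: abs_minus_commute)
    qed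
    then show ?thesis using eq unfolding A0_def A1_def by simp
  qed
qed



lemma lin_integrals:
  fixes a b M :: real
  assumes ab: "a \<le> b"
  shows "integral {a..b} (\<lambda>s. M * b - M * s) = M * (b - a)^2 / 2"
    and "integral {a..b} (\<lambda>s. M * s - M * a) = M * (b - a)^2 / 2"
proof -
  have c1: "((\<lambda>s. c) has_integral ((b - a) * c)) {a..b}" for c
    using has_integral_const_real[of c a b] ab by simp
  have "((\<lambda>s. M * b - M * s) has_integral ((b - a) * (M * b) - M * ((b\<^sup>2 - a\<^sup>2)/2))) {a..b}"
    by (intro has_integral_diff c1 has_integral_mult_right ident_has_integral ab)
  then have "integral {a..b} (\<lambda>s. M * b - M * s) = (b - a) * (M * b) - M * ((b\<^sup>2 - a\<^sup>2)/2)"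
    by (simp add: integral_unique)
  moreover have "(b - a) * (M * b) - M * ((b\<^sup>2 - a\<^sup>2)/2) = M * (b - a)^2 / 2"
    by (simp add: power2_eq_square field_simps)
  ultimately show "integral {a..b} (\<lambda>s. M * b - M * s) = M * (b - a)^2 / 2" by simp
  have "((\<lambda>s. M * s - M * a) has_integral (M * ((b\<^sup>2 - a\<^sup>2)/2) - (b - a) * (M * a))) {a..b}"
    by (intro has_integral_diff c1 has_integral_mult_right ident_has_integral ab)
  then have "integral {a..b} (\<lambda>s. M * s - M * a) = M * ((b\<^sup>2 - a\<^sup>2)/2) - (b - a) * (M * a)"
    by (simp add: integral_unique)
  moreover have "M * ((b\<^sup>2 - a\<^sup>2)/2) - (b - a) * (M * a) = M * (b - a)^2 / 2"
    by (simp add: power2_eq_square field_simps)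
  ultimately show "integral {a..b} (\<lambda>s. M * s - M * a) = M * (b - a)^2 / 2" by simp
qed

lemma cell_bound:
  fixes f :: "real \<Rightarrow> real" and a b M :: real
  assumes ab: "a \<le> b" and cont: "continuous_on {a..b} f"
    and lip: "\<And>x y. x \<in> {a..b} \<Longrightarrow> y \<in> {a..b} \<Longrightarrow> \<bar>f x - f y\<bar> \<le> M * \<bar>x - y\<bar>"
  shows "\<bar>(b - a) * f b - integral {a..b} f\<bar> \<le> M * (b - a)^2 / 2"
    and "\<bar>(b - a) * f a - integral {a..b} f\<bar> \<le> M * (b - a)^2 / 2"
proof -
  have fi: "f integrable_on {a..b}" using cont by (rule integrable_continuous_interval)
  have ci: "(\<lambda>s. c) integrable_on {a..b}" for c :: real by (rule integrable_const_ivl)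
  have "(b - a) * f b - integral {a..b} f = integral {a..b} (\<lambda>s. f b - f s)"
    using ab by (simp add: integral_diff[OF ci fi])
  also have "\<bar>\<dots>\<bar> \<le> integral {a..b} (\<lambda>s. M * b - M * s)"
  proof -
    have "norm (integral {a..b} (\<lambda>s. f b - f s)) \<le> integral {a..b} (\<lambda>s. M * b - M * s)"
    proof (rule integral_norm_bound_integral)
      show "(\<lambda>s. f b - f s) integrable_on {a..b}" by (intro integrable_diff ci fi)
      show "(\<lambda>s. M * b - M * s) integrable_on {a..b}"
        by (intro integrable_diff ci integrable_continuous_interval continuous_intros)
      fix s assume s: "s \<in> {a..b}"
      then show "norm (f b - f s) \<le> M * b - M * s"
        using lip[OF _ s, of b] ab by (simp add: right_diff_distrib)
    qed
    then show ?thesis by simp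
  qed
  finally show "\<bar>(b - a) * f b - integral {a..b} f\<bar> \<le> M * (b - a)^2 / 2"
    using lin_integrals(1)[OF ab] by simp
  have "(b - a) * f a - integral {a..b} f = integral {a..b} (\<lambda>s. f a - f s)"
    using ab by (simp add: integral_diff[OF ci fi])
  also have "\<bar>\<dots>\<bar> \<le> integral {a..b} (\<lambda>s. M * s - M * a)"
  proof -
    have "norm (integral {a..b} (\<lambda>s. f a - f s)) \<le> integral {a..b} (\<lambda>s. M * s - M * a)"
    proof (rule integral_norm_bound_integral)
      show "(\<lambda>s. f a - f s) integrable_on {a..b}" by (intro integrable_diff ci fi)
      show "(\<lambda>s. M * s - M * a) integrable_on {a..b}"
        by (intro integrable_diff ci integrable_continuous_interval continuous_intros)
      fix s assume s: "s \<in> {a..b}"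
      then show "norm (f a - f s) \<le> M * s - M * a"
        using lip[OF _ s, of a] ab by (simp add: right_diff_distrib)
    qed
    then show ?thesis by simp
  qed
  finally show "\<bar>(b - a) * f a - integral {a..b} f\<bar> \<le> M * (b - a)^2 / 2"
    using lin_integrals(2)[OF ab] by simp
qed



lemma riemann_sums_conj:
  fixes f :: "real \<Rightarrow> real" and M :: real and n k :: nat
  assumes n: "n \<ge> 1"
    and cont: "continuous_on {-1..1} f"
    and lip: "\<And>x y. x \<in> {-1..1} \<Longrightarrow> y \<in> {-1..1} \<Longrightarrow> \<bar>f x - f y\<bar> \<le> M * \<bar>x - y\<bar>"
  shows "k \<le> 2 * n \<longrightarrow> \<bar>(\<Sum>m<k. f (-1 + real (Suc m) / real n) / real n) - integral {-1..-1 + real k / real n} f\<bar>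
           \<le> real k * M / (2 * (real n)^2)
    \<and> \<bar>(\<Sum>m<k. f (-1 + real m / real n) / real n) - integral {-1..-1 + real k / real n} f\<bar>
           \<le> real k * M / (2 * (real n)^2)"
proof (induction k)
  case 0
  show ?case by simp
next
  case (Suc k)
  show ?case
  proof
  assume prem: "Suc k \<le> 2 * n"
  have IH: "\<bar>(\<Sum>m<k. f (-1 + real (Suc m) / real n) / real n) - integral {-1..-1 + real k / real n} f\<bar>
           \<le> real k * M / (2 * (real n)^2)"
     "\<bar>(\<Sum>m<k. f (-1 + real m / real n) / real n) - integral {-1..-1 + real k / real n} f\<bar>
           \<le> real k * M / (2 * (real n)^2)" using Suc.IH prem by auto
  define p where "p m = -1 + real m / real n" for m
  have npos: "real n > 0" using n by simp
  have pk: "-1 \<le> p k" "p k \<le> p (Suc k)" "p (Suc k) \<le> 1" unfolding p_def using prem npos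
    by (auto simp: field_simps)
  have diff: "p (Suc k) - p k = 1 / real n" unfolding p_def by (simp add: add_divide_distrib)
  have sub: "{p k..p (Suc k)} \<subseteq> {-1..1}" "{-1..p (Suc k)} \<subseteq> {-1..1}" using pk by auto
  have comb: "integral {-1..p k} f + integral {p k..p (Suc k)} f = integral {-1..p (Suc k)} f"
    by (rule Henstock_Kurzweil_Integration.integral_combine[OF pk(1) pk(2)])
       (rule integrable_continuous_interval, rule continuous_on_subset[OF cont sub(2)])
  have cb: "\<bar>(p (Suc k) - p k) * f (p (Suc k)) - integral {p k..p (Suc k)} f\<bar> \<le> M * (p (Suc k) - p k)^2 / 2"
           "\<bar>(p (Suc k) - p k) * f (p k) - integral {p k..p (Suc k)} f\<bar> \<le> M * (p (Suc k) - p k)^2 / 2"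
    by (rule cell_bound[OF pk(2) continuous_on_subset[OF cont sub(1)]];
        rule lip; use sub(1) in auto)+
  have e: "M * (1 / real n)^2 / 2 = M / (2 * (real n)^2)" by (simp add: power2_eq_square)
  have e2: "real k * M / (2 * (real n)^2) + M / (2 * (real n)^2) = real (Suc k) * M / (2 * (real n)^2)"
    by (simp add: add_divide_distrib[symmetric] algebra_simps)
  have IH1: "\<bar>(\<Sum>m<k. f (p (Suc m)) / real n) - integral {-1..p k} f\<bar> \<le> real k * M / (2 * (real n)^2)"
    using IH(1) unfolding p_def by simp
  have IH2: "\<bar>(\<Sum>m<k. f (p m) / real n) - integral {-1..p k} f\<bar> \<le> real k * M / (2 * (real n)^2)"
    using IH(2) unfolding p_def by simp
  have "\<bar>(\<Sum>m<Suc k. f (p (Suc m)) / real n) - integral {-1..p (Suc k)} f\<bar> \<le> real (Suc k) * M / (2 * (real n)^2)"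
  proof -
    have "(\<Sum>m<Suc k. f (p (Suc m)) / real n) - integral {-1..p (Suc k)} f
        = ((\<Sum>m<k. f (p (Suc m)) / real n) - integral {-1..p k} f)
          + ((p (Suc k) - p k) * f (p (Suc k)) - integral {p k..p (Suc k)} f)"
      using comb diff by simp
    then show ?thesis using IH1 cb(1) e e2 diff by (smt (verit))
  qed
  then have A: "\<bar>(\<Sum>m<Suc k. f (-1 + real (Suc m) / real n) / real n) - integral {-1..-1 + real (Suc k) / real n} f\<bar>
           \<le> real (Suc k) * M / (2 * (real n)^2)" unfolding p_def by simp
  have "\<bar>(\<Sum>m<Suc k. f (p m) / real n) - integral {-1..p (Suc k)} f\<bar> \<le> real (Suc k) * M / (2 * (real n)^2)"
  proof -
    have "(\<Sum>m<Suc k. f (p m) / real n) - integral {-1..p (Suc k)} f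
        = ((\<Sum>m<k. f (p m) / real n) - integral {-1..p k} f)
          + ((p (Suc k) - p k) * f (p k) - integral {p k..p (Suc k)} f)"
      using comb diff by simp
    then show ?thesis using IH2 cb(2) e e2 diff by (smt (verit))
  qed
  then have B: "\<bar>(\<Sum>m<Suc k. f (-1 + real m / real n) / real n) - integral {-1..-1 + real (Suc k) / real n} f\<bar>
           \<le> real (Suc k) * M / (2 * (real n)^2)" unfolding p_def by simp
  show "\<bar>(\<Sum>m<Suc k. f (-1 + real (Suc m) / real n) / real n) - integral {-1..-1 + real (Suc k) / real n} f\<bar>
           \<le> real (Suc k) * M / (2 * (real n)^2) \<and> \<bar>(\<Sum>m<Suc k. f (-1 + real m / real n) / real n) - integral {-1..-1 + real (Suc k) / real n} f\<bar>
           \<le> real (Suc k) * M / (2 * (real n)^2)" using A B by simp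
  qed
qed



lemma conv_of_lam:
  fixes a0 a1 :: "int \<Rightarrow> real" and n :: nat and L :: int
  assumes Ln: "L + int n \<ge> 0"
    and sym0: "\<And>l. l \<in> {1 - int n..L} \<Longrightarrow> a0 l = a0 (L + 1 - int n - l)"
    and sym1: "\<And>l. l \<in> {1 - int n..L + 1} \<Longrightarrow> a1 l = a1 (L + 2 - int n - l)"
    and c0: "(\<Sum>l\<in>{1 - int n..L}. a0 l) = 1"
    and c1: "(\<Sum>l\<in>{1 - int n..L + 1}. a1 l) = 1"
    and lam: "(\<Sum>k<nat (L + int n). \<bar>\<Sum>m<Suc k. a0 (1 - int n + int m) - a1 (1 - int n + int m)\<bar>) < 1"
  shows "convergent_scheme (subdiv a0 a1 (1 - int n) L)"
proof -
  define N where "N = nat (L + int n)"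
  define lo where "lo = 1 - int n"
  have LN: "L = lo + int N - 1" unfolding N_def lo_def using Ln by simp
  have L1: "L + 1 = lo + int N" using LN by simp
  have s0: "(\<Sum>k<N. a0 (lo + int k)) = 1" using c0 unfolding LN lo_def sum_int_nat by simp
  have s1: "(\<Sum>k<Suc N. a1 (lo + int k)) = 1" using c1 unfolding L1 lo_def sum_int_nat1 by simp
  have sy0: "a0 (lo + int k) = a0 (lo + int (N - 1 - k))" if k: "k < N" for k
  proof -
    have "a0 (lo + int k) = a0 (L + 1 - int n - (lo + int k))"
      by (rule sym0) (use k LN in \<open>auto simp: lo_def\<close>)
    also have "L + 1 - int n - (lo + int k) = lo + int (N - 1 - k)"
      using k LN unfolding lo_def by (simp add: of_nat_diff)
    finally show ?thesis .
  qed
  have sy1: "a1 (lo + int k) = a1 (lo + int (N - k))" if k: "k \<le> N" for k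
  proof -
    have "a1 (lo + int k) = a1 (L + 2 - int n - (lo + int k))"
      by (rule sym1) (use k LN in \<open>auto simp: lo_def\<close>)
    also have "L + 2 - int n - (lo + int k) = lo + int (N - k)"
      using k LN unfolding lo_def by (simp add: of_nat_diff)
    finally show ?thesis .
  qed
  define lamv where "lamv = (\<Sum>k<N. \<bar>\<Sum>m<Suc k. a0 (lo + int m) - a1 (lo + int m)\<bar>)"
  have "convergent_scheme (subdiv a0 a1 lo (lo + int N - 1))"
  proof (rule conv_abstract[where lam = lamv])
    show "(\<Sum>l\<in>{lo..lo + int N - 1}. a0 l) = 1" using s0 by (simp add: sum_int_nat)
    show "(\<Sum>l\<in>{lo..lo + int N - 1 + 1}. a1 l) = 1" using s1 sum_int_nat1[of a1 lo N] by simp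
    show "0 \<le> lamv" unfolding lamv_def by (auto intro: sum_nonneg)
    show "lamv < 1" using lam unfolding lamv_def N_def lo_def .
    fix g :: "int \<Rightarrow> real" and D assume "\<forall>i. \<bar>g (i + 1) - g i\<bar> \<le> D"
    then show "\<forall>i. \<bar>subdiv a0 a1 lo (lo + int N - 1) g (i + 1) - subdiv a0 a1 lo (lo + int N - 1) g i\<bar> \<le> lamv * D"
      unfolding lamv_def using contraction[OF s0 s1 sy0 sy1] by blast
  qed
  then show ?thesis using LN unfolding lo_def by simp
qed



lemma sum_kplus1: "(\<Sum>k<N. real k + 1) = real N * (real N + 1) / 2"
  by (induction N) (simp_all add: field_simps)

lemma lam_bound:
  fixes a0 a1 :: "int \<Rightarrow> real" and n :: nat and L :: int and r :: "real \<Rightarrow> real" and E nr nr' :: real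
  assumes n: "n \<ge> 1" and Lc: "L = int n - 1 \<or> L = int n"
    and approx: "\<And>j. j \<in> {1 - int n..L} \<Longrightarrow> \<bar>a0 j - a1 j - r (real_of_int j / real n) / (real n)^2\<bar> \<le> E"
    and rc: "continuous_on {-1..1} r"
    and rlip: "\<And>x y. x \<in> {-1..1} \<Longrightarrow> y \<in> {-1..1} \<Longrightarrow> \<bar>r x - r y\<bar> \<le> nr' * \<bar>x - y\<bar>"
    and Rlip: "\<And>x y. x \<in> {-1..1} \<Longrightarrow> y \<in> {-1..1} \<Longrightarrow>
        \<bar>\<bar>integral {-1..x} r\<bar> - \<bar>integral {-1..y} r\<bar>\<bar> \<le> nr * \<bar>x - y\<bar>"
    and Rc: "continuous_on {-1..1} (\<lambda>t. \<bar>integral {-1..t} r\<bar>)"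
  shows "(\<Sum>k<nat (L + int n). \<bar>\<Sum>m<Suc k. a0 (1 - int n + int m) - a1 (1 - int n + int m)\<bar>)
         \<le> integral {-1..1} (\<lambda>t. \<bar>integral {-1..t} r\<bar>) + nr / real n
           + (nr' / (2 * (real n)^3) + E) * (real (nat (L + int n)) * (real (nat (L + int n)) + 1) / 2)"
proof -
  define N where "N = nat (L + int n)"
  define x where "x m = -1 + real (Suc m) / real n" for m
  define R where "R t = integral {-1..t} r" for t
  have npos: "real n > 0" using n by simp
  have N2: "N \<le> 2 * n" using Lc unfolding N_def by auto
  have xm: "real_of_int (1 - int n + int m) / real n = x m" for m
    unfolding x_def using npos by (simp add: field_simps)
  have per: "\<bar>\<Sum>m<Suc k. a0 (1 - int n + int m) - a1 (1 - int n + int m)\<bar>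
      \<le> \<bar>R (x k)\<bar> / real n + (real k + 1) * (nr' / (2 * (real n)^3) + E)" if k: "k < N" for k
  proof -
    have "(\<Sum>m<Suc k. a0 (1 - int n + int m) - a1 (1 - int n + int m))
        = (\<Sum>m<Suc k. r (x m) / (real n)^2) + (\<Sum>m<Suc k. a0 (1 - int n + int m) - a1 (1 - int n + int m) - r (x m) / (real n)^2)"
      by (simp add: sum.distrib[symmetric])
    moreover have "\<bar>\<Sum>m<Suc k. a0 (1 - int n + int m) - a1 (1 - int n + int m) - r (x m) / (real n)^2\<bar> \<le> (real k + 1) * E"
    proof -
      have "\<bar>\<Sum>m<Suc k. a0 (1 - int n + int m) - a1 (1 - int n + int m) - r (x m) / (real n)^2\<bar>
          \<le> (\<Sum>m<Suc k. \<bar>a0 (1 - int n + int m) - a1 (1 - int n + int m) - r (x m) / (real n)^2\<bar>)"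
        by (rule sum_abs)
      also have "\<dots> \<le> (\<Sum>m<Suc k. E)"
      proof (rule sum_mono)
        fix m assume "m \<in> {..<Suc k}"
        then have "1 - int n + int m \<in> {1 - int n..L}" using k unfolding N_def by auto
        from approx[OF this] show "\<bar>a0 (1 - int n + int m) - a1 (1 - int n + int m) - r (x m) / (real n)^2\<bar> \<le> E"
          unfolding xm .
      qed
      finally show ?thesis by (simp add: algebra_simps)
    qed
    moreover have "\<bar>\<Sum>m<Suc k. r (x m) / (real n)^2\<bar> \<le> \<bar>R (x k)\<bar> / real n + (real k + 1) * (nr' / (2 * (real n)^3))"
    proof -
      have "Suc k \<le> 2 * n" using k N2 by simp
      then have rs: "\<bar>(\<Sum>m<Suc k. r (x m) / real n) - R (x k)\<bar> \<le> real (Suc k) * nr' / (2 * (real n)^2)"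
        using riemann_sums_conj[OF n rc rlip, of "Suc k"] unfolding x_def R_def by auto
      have eq: "(\<Sum>m<Suc k. r (x m) / (real n)^2) = (\<Sum>m<Suc k. r (x m) / real n) / real n"
        by (subst sum_divide_distrib) (simp add: power2_eq_square)
      have "\<bar>\<Sum>m<Suc k. r (x m) / real n\<bar> \<le> \<bar>R (x k)\<bar> + real (Suc k) * nr' / (2 * (real n)^2)"
        using rs by linarith
      then have "\<bar>\<Sum>m<Suc k. r (x m) / real n\<bar> / real n \<le> (\<bar>R (x k)\<bar> + real (Suc k) * nr' / (2 * (real n)^2)) / real n"
        using npos by (intro divide_right_mono) auto
      also have "\<dots> = \<bar>R (x k)\<bar> / real n + (real k + 1) * (nr' / (2 * (real n)^3))"
        using npos by (simp add: field_simps power2_eq_square power3_eq_cube)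
      finally show ?thesis unfolding eq by (simp add: abs_div_pos npos)
    qed
    ultimately show ?thesis by (smt (verit) distrib_left)
  qed
  have "(\<Sum>k<N. \<bar>\<Sum>m<Suc k. a0 (1 - int n + int m) - a1 (1 - int n + int m)\<bar>)
      \<le> (\<Sum>k<N. \<bar>R (x k)\<bar> / real n + (real k + 1) * (nr' / (2 * (real n)^3) + E))"
    by (rule sum_mono) (use per in auto)
  also have "\<dots> = (\<Sum>k<N. \<bar>R (x k)\<bar> / real n) + (nr' / (2 * (real n)^3) + E) * (real N * (real N + 1) / 2)"
  proof -
    have a: "(\<Sum>k<N. \<bar>R (x k)\<bar> / real n + (real k + 1) * (nr' / (2 * (real n)^3) + E))
        = (\<Sum>k<N. \<bar>R (x k)\<bar> / real n) + (\<Sum>k<N. (real k + 1) * (nr' / (2 * (real n)^3) + E))"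
      by (rule sum.distrib)
    have b: "(\<Sum>k<N. (real k + 1) * (nr' / (2 * (real n)^3) + E)) = (\<Sum>k<N. real k + 1) * (nr' / (2 * (real n)^3) + E)"
      by (rule sum_distrib_right[symmetric])
    show ?thesis unfolding a b sum_kplus1 by (simp add: algebra_simps)
  qed
  finally have s1: "(\<Sum>k<N. \<bar>\<Sum>m<Suc k. a0 (1 - int n + int m) - a1 (1 - int n + int m)\<bar>)
    \<le> (\<Sum>k<N. \<bar>R (x k)\<bar> / real n) + (nr' / (2 * (real n)^3) + E) * (real N * (real N + 1) / 2)" .
  have s2: "(\<Sum>k<N. \<bar>R (x k)\<bar> / real n) \<le> integral {-1..1} (\<lambda>t. \<bar>R t\<bar>) + nr / real n"
  proof -
    have e1: "-1 + real (2 * n) / real n = 1" using npos by simp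
    have bnd: "real (2 * n) * nr / (2 * (real n)^2) = nr / real n" using npos by (simp add: power2_eq_square)
    note RS0 = mp[OF riemann_sums_conj[OF n Rc Rlip, of "2 * n"] order_refl]
    have RS1: "\<bar>(\<Sum>m<2 * n. \<bar>R (-1 + real (Suc m) / real n)\<bar> / real n) - integral {-1..1} (\<lambda>t. \<bar>R t\<bar>)\<bar> \<le> nr / real n"
      using conjunct1[OF RS0] unfolding e1 bnd R_def .
    have RS2: "\<bar>(\<Sum>m<2 * n. \<bar>R (-1 + real m / real n)\<bar> / real n) - integral {-1..1} (\<lambda>t. \<bar>R t\<bar>)\<bar> \<le> nr / real n"
      using conjunct2[OF RS0] unfolding e1 bnd R_def .
    from Lc show ?thesis
    proof
      assume L1: "L = int n - 1"
      then have NN: "N = 2 * n - 1" unfolding N_def by auto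
      obtain p where p: "2 * n = Suc p" "N = p" using n NN by (cases "2 * n") auto
      have sh: "(\<Sum>m<Suc p. \<bar>R (-1 + real m / real n)\<bar> / real n)
          = \<bar>R (-1 + real 0 / real n)\<bar> / real n + (\<Sum>m<p. \<bar>R (-1 + real (Suc m) / real n)\<bar> / real n)"
        by (rule sum.lessThan_Suc_shift)
      have z: "R (-1 + real 0 / real n) = 0" unfolding R_def by simp
      have "(\<Sum>k<N. \<bar>R (x k)\<bar> / real n) = (\<Sum>m<2 * n. \<bar>R (-1 + real m / real n)\<bar> / real n)"
        unfolding p sh z x_def by simp
      then show ?thesis using RS2 by linarith
    next
      assume L2: "L = int n"
      then have NN: "N = 2 * n" unfolding N_def by auto
      have "(\<Sum>k<N. \<bar>R (x k)\<bar> / real n) = (\<Sum>m<2 * n. \<bar>R (-1 + real (Suc m) / real n)\<bar> / real n)"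
        unfolding NN x_def ..
      then show ?thesis using RS1 by linarith
    qed
  qed
  have fin: "(\<Sum>k<N. \<bar>\<Sum>m<Suc k. a0 (1 - int n + int m) - a1 (1 - int n + int m)\<bar>)
    \<le> integral {-1..1} (\<lambda>t. \<bar>R t\<bar>) + nr / real n + (nr' / (2 * (real n)^3) + E) * (real N * (real N + 1) / 2)" using s1 s2 by linarith
  show ?thesis using fin by (simp only: N_def R_def)
qed



lemma r_facts:
  fixes r r' :: "real \<Rightarrow> real"
  assumes r_deriv: "\<And>x. x \<in> {-1..1} \<Longrightarrow> (r has_real_derivative r' x) (at x within {-1..1})"
    and r'_cont: "continuous_on {-1..1} r'"
  shows "continuous_on {-1..1} r"
    and "Sup ((\<lambda>x. \<bar>r x\<bar>) ` {-1..1}) \<ge> 0"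
    and "Sup ((\<lambda>x. \<bar>r' x\<bar>) ` {-1..1}) \<ge> 0"
    and "\<And>x y. x \<in> {-1..1} \<Longrightarrow> y \<in> {-1..1} \<Longrightarrow> \<bar>r x - r y\<bar> \<le> Sup ((\<lambda>x. \<bar>r' x\<bar>) ` {-1..1}) * \<bar>x - y\<bar>"
    and "\<And>x y. x \<in> {-1..1} \<Longrightarrow> y \<in> {-1..1} \<Longrightarrow>
          \<bar>\<bar>integral {-1..x} r\<bar> - \<bar>integral {-1..y} r\<bar>\<bar> \<le> Sup ((\<lambda>x. \<bar>r x\<bar>) ` {-1..1}) * \<bar>x - y\<bar>"
    and "continuous_on {-1..1} (\<lambda>t. \<bar>integral {-1..t} r\<bar>)"
proof -
  define nr where "nr = Sup ((\<lambda>x. \<bar>r x\<bar>) ` {-1..1})"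
  define nr' where "nr' = Sup ((\<lambda>x. \<bar>r' x\<bar>) ` {-1..1})"
  show rc: "continuous_on {-1..1} r" by (rule DERIV_continuous_on[OF r_deriv])
  have bdd: "bdd_above ((\<lambda>x. \<bar>f x\<bar>) ` {-1..1})" if "continuous_on {-1..1} f" for f :: "real \<Rightarrow> real"
    by (intro bounded_imp_bdd_above compact_imp_bounded compact_continuous_image continuous_intros that compact_Icc)
  have rb: "\<bar>r x\<bar> \<le> nr" if "x \<in> {-1..1}" for x
    unfolding nr_def by (rule cSup_upper[OF imageI[OF that] bdd[OF rc]])
  have r'b: "\<bar>r' x\<bar> \<le> nr'" if "x \<in> {-1..1}" for x
    unfolding nr'_def by (rule cSup_upper[OF imageI[OF that] bdd[OF r'_cont]])
  show "Sup ((\<lambda>x. \<bar>r x\<bar>) ` {-1..1}) \<ge> 0" using rb[of 0] unfolding nr_def by simp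
  show "Sup ((\<lambda>x. \<bar>r' x\<bar>) ` {-1..1}) \<ge> 0" using r'b[of 0] unfolding nr'_def by simp
  have nr0: "nr \<ge> 0" using rb[of 0] by simp
  show "\<bar>r x - r y\<bar> \<le> Sup ((\<lambda>x. \<bar>r' x\<bar>) ` {-1..1}) * \<bar>x - y\<bar>"
    if "x \<in> {-1..1}" "y \<in> {-1..1}" for x y
    using field_differentiable_bound[of "{-1..1}" r r' nr' x y] r_deriv r'b that
    unfolding nr'_def by simp
  define R where "R t = integral {-1..t} r" for t
  have one: "\<bar>R x - R y\<bar> \<le> nr * (x - y)" if "y \<in> {-1..1}" "x \<in> {-1..1}" "y \<le> x" for x y
  proof -
    have "integral {-1..y} r + integral {y..x} r = integral {-1..x} r"
      by (rule Henstock_Kurzweil_Integration.integral_combine)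
         (use that in auto, auto intro!: integrable_continuous_interval continuous_on_subset[OF rc])
    then have "R x - R y = integral {y..x} r" unfolding R_def by simp
    also have "\<bar>\<dots>\<bar> \<le> integral {y..x} (\<lambda>s. nr)"
    proof -
      have "norm (integral {y..x} r) \<le> integral {y..x} (\<lambda>s. nr)"
        by (rule integral_norm_bound_integral)
           (use that in \<open>auto intro!: integrable_continuous_interval continuous_on_subset[OF rc] rb\<close>)
      then show ?thesis by simp
    qed
    also have "\<dots> = nr * (x - y)" using that by simp
    finally show ?thesis .
  qed
  have Rl: "\<bar>R x - R y\<bar> \<le> nr * \<bar>x - y\<bar>" if "x \<in> {-1..1}" "y \<in> {-1..1}" for x y
  proof (cases "y \<le> x")
    case True then show ?thesis using one[of y x] that by simp
  next
    case False then show ?thesis using one[of x y] that by (simp add: abs_minus_commute)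
  qed
  have Rl2: "\<bar>\<bar>R x\<bar> - \<bar>R y\<bar>\<bar> \<le> nr * \<bar>x - y\<bar>" if "x \<in> {-1..1}" "y \<in> {-1..1}" for x y
    using Rl[OF that] by linarith
  show "\<bar>\<bar>integral {-1..x} r\<bar> - \<bar>integral {-1..y} r\<bar>\<bar> \<le> Sup ((\<lambda>x. \<bar>r x\<bar>) ` {-1..1}) * \<bar>x - y\<bar>"
    if "x \<in> {-1..1}" "y \<in> {-1..1}" for x y
    using Rl2[OF that] unfolding R_def nr_def .
  have "nr-lipschitz_on {-1..1} (\<lambda>t. \<bar>R t\<bar>)"
    by (rule lipschitz_onI) (use Rl2 nr0 in \<open>auto simp: dist_real_def\<close>)
  then show "continuous_on {-1..1} (\<lambda>t. \<bar>integral {-1..t} r\<bar>)"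
    unfolding R_def by (rule lipschitz_on_continuous_on)
qed

lemma quad_pos:
  fixes A B C D x :: real
  assumes A: "A > 0" and D: "D = B^2 - 4 * A * C" and x: "x > (sqrt D + B) / (2 * A)"
  shows "A * x^2 - B * x + C > 0"
proof -
  have "2 * A * x > sqrt D + B" using x A by (simp add: field_simps)
  then have h: "2 * A * x - B > sqrt D" by simp
  have "(2 * A * x - B)^2 > D"
  proof (cases "D \<ge> 0")
    case True
    then have "sqrt D \<ge> 0" by simp
    then have "(2 * A * x - B)^2 > (sqrt D)^2" using h
      by (intro power_strict_mono) auto
    then show ?thesis using True by simp
  next
    case False
    then show ?thesis by (smt (verit) zero_le_power2)
  qed
  then have "4 * A * (A * x^2 - B * x + C) > 0" unfolding D by (simp add: power2_eq_square algebra_simps)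
  then show ?thesis using A by (simp add: zero_less_mult_iff)
qed



theorem theorem5p4:
  fixes a0 a1 :: "nat \<Rightarrow> int \<Rightarrow> real"
    and L :: "nat \<Rightarrow> int"
    and r r' :: "real \<Rightarrow> real"
    and \<alpha> \<mu> :: real
  assumes L_choice: "\<And>n. n \<ge> 1 \<Longrightarrow> L n = int n - 1 \<or> L n = int n"
    and sym0: "\<And>n l. n \<ge> 1 \<Longrightarrow> l \<in> {1 - int n..L n} \<Longrightarrow> a0 n l = a0 n (L n + 1 - int n - l)"
    and sym1: "\<And>n l. n \<ge> 1 \<Longrightarrow> l \<in> {1 - int n..L n + 1} \<Longrightarrow> a1 n l = a1 n (L n + 2 - int n - l)"
    and const0: "\<And>n. n \<ge> 1 \<Longrightarrow> (\<Sum>l\<in>{1 - int n..L n}. a0 n l) = 1"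
    and const1: "\<And>n. n \<ge> 1 \<Longrightarrow> (\<Sum>l\<in>{1 - int n..L n + 1}. a1 n l) = 1"
    and r_deriv: "\<And>x. x \<in> {-1..1} \<Longrightarrow> (r has_real_derivative r' x) (at x within {-1..1})"
    and r'_cont: "continuous_on {-1..1} r'"
    and alpha: "\<alpha> > 2" and mu: "\<mu> > 0"
    and approx: "\<And>n j. n \<ge> 1 \<Longrightarrow> j \<in> {1 - int n..L n} \<Longrightarrow>
        \<bar>a0 n j - a1 n j - r (real_of_int j / real n) * real n powr (-2)\<bar> \<le> \<mu> * real n powr (-\<alpha>)"
    and R_small: "integral {-1..1} (\<lambda>t. \<bar>integral {-1..t} r\<bar>) < 1"
  shows "(\<exists>n0::real. \<forall>n::nat. n \<ge> 1 \<and> real n > n0 \<longrightarrow>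
            convergent_scheme (subdiv (a0 n) (a1 n) (1 - int n) (L n)))
       \<and> (\<alpha> = 3 \<longrightarrow>
          (let nR = integral {-1..1} (\<lambda>t. \<bar>integral {-1..t} r\<bar>);
               nr = Sup ((\<lambda>x. \<bar>r x\<bar>) ` {-1..1});
               nr' = Sup ((\<lambda>x. \<bar>r' x\<bar>) ` {-1..1});
               B = nr + 2 * (\<mu> + nr')
           in (\<forall>n::nat. n \<ge> 1 \<and> L n = int n - 1 \<and>
                 real n > (sqrt (B\<^sup>2 + 4 * (nR - 1) * (\<mu> + nr')) + B) / (2 * (1 - nR))
                 \<longrightarrow> convergent_scheme (subdiv (a0 n) (a1 n) (1 - int n) (L n)))
            \<and> (\<forall>n::nat. n \<ge> 1 \<and> L n = int n \<and>
                 real n > (sqrt (B\<^sup>2 + 4 * (1 - nR) * \<mu>) + B) / (2 * (1 - nR))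
                 \<longrightarrow> convergent_scheme (subdiv (a0 n) (a1 n) (1 - int n) (L n)))))"
proof -
  define nR where "nR = integral {-1..1} (\<lambda>t. \<bar>integral {-1..t} r\<bar>)"
  define nr where "nr = Sup ((\<lambda>x. \<bar>r x\<bar>) ` {-1..1})"
  define nr' where "nr' = Sup ((\<lambda>x. \<bar>r' x\<bar>) ` {-1..1})"
  have rd: "\<And>x. x \<in> {-1..1} \<Longrightarrow> (r has_real_derivative r' x) (at x within {-1..1})" by (rule r_deriv)
  have rf1: "continuous_on {-1..1} r" by (rule r_facts(1)[OF rd r'_cont])
  have rf2: "nr \<ge> 0" unfolding nr_def by (rule r_facts(2)[OF rd r'_cont])
  have rf3: "nr' \<ge> 0" unfolding nr'_def by (rule r_facts(3)[OF rd r'_cont])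
  have rf4: "\<And>x y. x \<in> {-1..1} \<Longrightarrow> y \<in> {-1..1} \<Longrightarrow> \<bar>r x - r y\<bar> \<le> nr' * \<bar>x - y\<bar>"
    unfolding nr'_def by (rule r_facts(4)[OF rd r'_cont])
  have rf5: "\<And>x y. x \<in> {-1..1} \<Longrightarrow> y \<in> {-1..1} \<Longrightarrow>
          \<bar>\<bar>integral {-1..x} r\<bar> - \<bar>integral {-1..y} r\<bar>\<bar> \<le> nr * \<bar>x - y\<bar>"
    unfolding nr_def by (rule r_facts(5)[OF rd r'_cont])
  have rf6: "continuous_on {-1..1} (\<lambda>t. \<bar>integral {-1..t} r\<bar>)" by (rule r_facts(6)[OF rd r'_cont])
  have A: "1 - nR > 0" using R_small unfolding nR_def by simp
  have nr0: "nr \<ge> 0" and nr'0: "nr' \<ge> 0" using rf2 rf3 .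
  define lamf where "lamf n = (\<Sum>k<nat (L n + int n). \<bar>\<Sum>m<Suc k. a0 n (1 - int n + int m) - a1 n (1 - int n + int m)\<bar>)" for n
  have approx': "\<bar>a0 n j - a1 n j - r (real_of_int j / real n) / (real n)^2\<bar> \<le> \<mu> * real n powr (-\<alpha>)"
    if "n \<ge> 1" "j \<in> {1 - int n..L n}" for n j
  proof -
    have "real n powr (-2) = 1 / (real n)^2" by (simp add: powr_minus_divide)
    then show ?thesis using approx[OF that] by simp
  qed
  have lamb: "lamf n \<le> nR + nr / real n + (nr' / (2 * (real n)^3) + \<mu> * real n powr (-\<alpha>))
        * (real (nat (L n + int n)) * (real (nat (L n + int n)) + 1) / 2)" if n: "n \<ge> 1" for n
    unfolding lamf_def nR_def
    by (rule lam_bound[OF n L_choice[OF n] approx'[OF n] rf1 rf4 rf5 rf6])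
  have conv: "convergent_scheme (subdiv (a0 n) (a1 n) (1 - int n) (L n))" if n: "n \<ge> 1" and lt: "lamf n < 1" for n
  proof (rule conv_of_lam)
    show "L n + int n \<ge> 0" using L_choice[OF n] n by auto
    show "\<And>l. l \<in> {1 - int n..L n} \<Longrightarrow> a0 n l = a0 n (L n + 1 - int n - l)" by (rule sym0[OF n])
    show "\<And>l. l \<in> {1 - int n..L n + 1} \<Longrightarrow> a1 n l = a1 n (L n + 2 - int n - l)" by (rule sym1[OF n])
    show "(\<Sum>l\<in>{1 - int n..L n}. a0 n l) = 1" by (rule const0[OF n])
    show "(\<Sum>l\<in>{1 - int n..L n + 1}. a1 n l) = 1" by (rule const1[OF n])
    show "(\<Sum>k<nat (L n + int n). \<bar>\<Sum>m<Suc k. a0 n (1 - int n + int m) - a1 n (1 - int n + int m)\<bar>) < 1"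
      using lt unfolding lamf_def .
  qed
  have part1: "\<exists>n0::real. \<forall>n::nat. n \<ge> 1 \<and> real n > n0 \<longrightarrow>
            convergent_scheme (subdiv (a0 n) (a1 n) (1 - int n) (L n))"
  proof -
    define u where "u n = (nr + 2 * nr') * inverse (real n) + 3 * \<mu> * real n powr (2 - \<alpha>)" for n :: nat
    have "u \<longlonglongrightarrow> (nr + 2 * nr') * 0 + 3 * \<mu> * 0"
      unfolding u_def
      by (intro tendsto_intros tendsto_inverse_0_at_top tendsto_neg_powr filterlim_real_sequentially)
         (use alpha in simp)
    then have "eventually (\<lambda>n. u n < 1 - nR) sequentially"
      using A by (intro order_tendstoD) auto
    then obtain N0 where N0: "\<And>n. n \<ge> N0 \<Longrightarrow> u n < 1 - nR" by (auto simp: eventually_sequentially)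
    show ?thesis
    proof (intro exI[of _ "real N0"] allI impI)
      fix n :: nat assume h: "1 \<le> n \<and> real N0 < real n"
      then have n: "n \<ge> 1" and nN: "n \<ge> N0" by auto
      define t where "t = real n"
      have t1: "t \<ge> 1" using n unfolding t_def by simp
      define P where "P = real (nat (L n + int n)) * (real (nat (L n + int n)) + 1) / 2"
      define c1 where "c1 = nr' / (2 * t^3)"
      define c2 where "c2 = \<mu> * t powr (-\<alpha>)"
      have c1p: "c1 \<ge> 0" unfolding c1_def using nr'0 t1 by simp
      have c2p: "c2 \<ge> 0" unfolding c2_def using mu by simp
      have Nle: "real (nat (L n + int n)) \<le> 2 * t" using L_choice[OF n] unfolding t_def by auto
      have P0: "P \<ge> 0" unfolding P_def by simp
      have P3: "P \<le> 3 * t^2"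
      proof -
        have "real (nat (L n + int n)) * (real (nat (L n + int n)) + 1) \<le> (2 * t) * (2 * t + 1)"
          using Nle by (intro mult_mono) auto
        also have "\<dots> \<le> 6 * t^2" using t1 by (simp add: power2_eq_square algebra_simps)
        finally show ?thesis unfolding P_def by simp
      qed
      have "(c1 + c2) * P \<le> (c1 + c2) * (3 * t^2)" using P3 c1p c2p by (intro mult_left_mono) auto
      also have "\<dots> = 3 * nr' / (2 * t) + 3 * \<mu> * t powr (2 - \<alpha>)"
      proof -
        have "t powr (2 - \<alpha>) = t powr 2 * t powr (-\<alpha>)" by (simp add: powr_add[symmetric])
        also have "t powr 2 = t^2" using t1 by simp
        finally have "t powr (2 - \<alpha>) = t^2 * t powr (-\<alpha>)" .
        then show ?thesis unfolding c1_def c2_def using t1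
          by (simp add: field_simps power2_eq_square power3_eq_cube)
      qed
      also have "\<dots> \<le> 2 * nr' / t + 3 * \<mu> * t powr (2 - \<alpha>)"
        using nr'0 t1 by (simp add: field_simps)
      finally have cP: "(c1 + c2) * P \<le> 2 * nr' / t + 3 * \<mu> * t powr (2 - \<alpha>)" .
      have "lamf n \<le> nR + nr / t + (c1 + c2) * P" using lamb[OF n] unfolding c1_def c2_def P_def t_def .
      also have "\<dots> \<le> nR + u n"
        using cP unfolding u_def t_def by (simp add: divide_inverse algebra_simps)
      also have "\<dots> < 1" using N0[OF nN] by simp
      finally show "convergent_scheme (subdiv (a0 n) (a1 n) (1 - int n) (L n))" by (rule conv[OF n])
    qed
  qed
  have part2: "\<alpha> = 3 \<longrightarrow>
          (let nR = integral {-1..1} (\<lambda>t. \<bar>integral {-1..t} r\<bar>);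
               nr = Sup ((\<lambda>x. \<bar>r x\<bar>) ` {-1..1});
               nr' = Sup ((\<lambda>x. \<bar>r' x\<bar>) ` {-1..1});
               B = nr + 2 * (\<mu> + nr')
           in (\<forall>n::nat. n \<ge> 1 \<and> L n = int n - 1 \<and>
                 real n > (sqrt (B\<^sup>2 + 4 * (nR - 1) * (\<mu> + nr')) + B) / (2 * (1 - nR))
                 \<longrightarrow> convergent_scheme (subdiv (a0 n) (a1 n) (1 - int n) (L n)))
            \<and> (\<forall>n::nat. n \<ge> 1 \<and> L n = int n \<and>
                 real n > (sqrt (B\<^sup>2 + 4 * (1 - nR) * \<mu>) + B) / (2 * (1 - nR))
                 \<longrightarrow> convergent_scheme (subdiv (a0 n) (a1 n) (1 - int n) (L n))))"
  proof
    assume a3: "\<alpha> = 3"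
    define B where "B = nr + 2 * (\<mu> + nr')"
    have p3: "real n powr (-\<alpha>) = 1 / (real n)^3" if "n \<ge> 1" for n :: nat
      unfolding a3 using that by (simp add: powr_minus_divide)
    have c1: "convergent_scheme (subdiv (a0 n) (a1 n) (1 - int n) (L n))"
      if n: "n \<ge> 1" and Ln: "L n = int n - 1"
        and gt: "real n > (sqrt (B\<^sup>2 + 4 * (nR - 1) * (\<mu> + nr')) + B) / (2 * (1 - nR))" for n
    proof -
      define t where "t = real n"
      have t1: "t \<ge> 1" using n unfolding t_def by simp
      have q: "(1 - nR) * t^2 - B * t + (\<mu> + nr') > 0"
        by (rule quad_pos[OF A _ gt[folded t_def]]) (simp add: algebra_simps)
      have NN: "real (nat (L n + int n)) = 2 * t - 1" using Ln n unfolding t_def by simp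
      have lb: "lamf n \<le> nR + nr / t + (nr' / (2 * t^3) + \<mu> * (1 / t^3)) * ((2 * t - 1) * ((2 * t - 1) + 1) / 2)"
        using lamb[OF n] unfolding p3[OF n] NN t_def .
      have eq: "(nR + nr / t + (nr' / (2 * t^3) + \<mu> * (1 / t^3)) * ((2 * t - 1) * ((2 * t - 1) + 1) / 2)) * t^2
          = nR * t^2 + nr * t + (nr' / 2 + \<mu>) * (2 * t - 1)"
        using t1 by (simp add: field_simps power2_eq_square power3_eq_cube)
      have "nr' * t \<ge> nr'" using t1 nr'0 by (simp add: mult_le_cancel_left1)
      then have "nR * t^2 + nr * t + (nr' / 2 + \<mu>) * (2 * t - 1) < t^2"
        using q nr'0 unfolding B_def by (simp add: algebra_simps)
      then have "(nR + nr / t + (nr' / (2 * t^3) + \<mu> * (1 / t^3)) * ((2 * t - 1) * ((2 * t - 1) + 1) / 2)) * t^2 < 1 * t^2"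
        unfolding eq by simp
      then have "nR + nr / t + (nr' / (2 * t^3) + \<mu> * (1 / t^3)) * ((2 * t - 1) * ((2 * t - 1) + 1) / 2) < 1"
        using t1 by (simp only: mult_less_cancel_right) simp
      then show ?thesis using lb by (intro conv[OF n]) simp
    qed
    have c2: "convergent_scheme (subdiv (a0 n) (a1 n) (1 - int n) (L n))"
      if n: "n \<ge> 1" and Ln: "L n = int n"
        and gt: "real n > (sqrt (B\<^sup>2 + 4 * (1 - nR) * \<mu>) + B) / (2 * (1 - nR))" for n
    proof -
      define t where "t = real n"
      have t1: "t \<ge> 1" using n unfolding t_def by simp
      have q: "(1 - nR) * t^2 - B * t + (- \<mu>) > 0"
        by (rule quad_pos[OF A _ gt[folded t_def]]) (simp add: algebra_simps)
      have NN: "real (nat (L n + int n)) = 2 * t" using Ln n unfolding t_def by simp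
      have lb: "lamf n \<le> nR + nr / t + (nr' / (2 * t^3) + \<mu> * (1 / t^3)) * ((2 * t) * ((2 * t) + 1) / 2)"
        using lamb[OF n] unfolding p3[OF n] NN t_def .
      have eq: "(nR + nr / t + (nr' / (2 * t^3) + \<mu> * (1 / t^3)) * ((2 * t) * ((2 * t) + 1) / 2)) * t^2
          = nR * t^2 + nr * t + (nr' / 2 + \<mu>) * (2 * t + 1)"
        using t1 by (simp add: field_simps power2_eq_square power3_eq_cube)
      have "nr' * t \<ge> nr'" using t1 nr'0 by (simp add: mult_le_cancel_left1)
      then have "nR * t^2 + nr * t + (nr' / 2 + \<mu>) * (2 * t + 1) < t^2"
        using q nr'0 unfolding B_def by (simp add: algebra_simps)
      then have "(nR + nr / t + (nr' / (2 * t^3) + \<mu> * (1 / t^3)) * ((2 * t) * ((2 * t) + 1) / 2)) * t^2 < 1 * t^2"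
        unfolding eq by simp
      then have "nR + nr / t + (nr' / (2 * t^3) + \<mu> * (1 / t^3)) * ((2 * t) * ((2 * t) + 1) / 2) < 1"
        using t1 by (simp only: mult_less_cancel_right) simp
      then show ?thesis using lb by (intro conv[OF n]) simp
    qed
    show "let nR = integral {-1..1} (\<lambda>t. \<bar>integral {-1..t} r\<bar>);
               nr = Sup ((\<lambda>x. \<bar>r x\<bar>) ` {-1..1});
               nr' = Sup ((\<lambda>x. \<bar>r' x\<bar>) ` {-1..1});
               B = nr + 2 * (\<mu> + nr')
           in (\<forall>n::nat. n \<ge> 1 \<and> L n = int n - 1 \<and>
                 real n > (sqrt (B\<^sup>2 + 4 * (nR - 1) * (\<mu> + nr')) + B) / (2 * (1 - nR))
                 \<longrightarrow> convergent_scheme (subdiv (a0 n) (a1 n) (1 - int n) (L n)))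
            \<and> (\<forall>n::nat. n \<ge> 1 \<and> L n = int n \<and>
                 real n > (sqrt (B\<^sup>2 + 4 * (1 - nR) * \<mu>) + B) / (2 * (1 - nR))
                 \<longrightarrow> convergent_scheme (subdiv (a0 n) (a1 n) (1 - int n) (L n)))"
      unfolding Let_def nR_def[symmetric] nr_def[symmetric] nr'_def[symmetric] B_def[symmetric]
      using c1 c2 by blast
  qed
  show ?thesis using part1 part2 by blast
qed

end
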